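(* Let $A,B\subseteq\mathbb{N}$ with $A\in\mathcal{D}$ and $A\cap B=\emptyset$. Then $\underline{\underline{d}}(A\cup B)=d(A)+\underline{\underline{d}}(B)$.
   Context: $\mathbb{N}=\{1,2,3,\dots\}$. For $A\subseteq\mathbb{N}$ let $A(n)=|A\cap[1,n]|$. Let $\mathcal{D}$ be the collection of all $A\subseteq\mathbb{N}$ for which the asymptotic density $d(A)=\lim_{n\to\infty}\frac{A(n)}{n}$ exists. Define $\underline{\underline{d}}(A)=\sup\{d(B);\ B\subseteq A,\ B\in\mathcal{D}\}$. *)

theory Defs
  imports "HOL-Analysis.Analysis"
begin

text \<open>Subsets of the positive integers are modelled as sets of naturals contained in
  the set of positive naturals.\<close>

definition counting :: "nat set \<Rightarrow> nat \<Rightarrow> nat" where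
  "counting A n = card (A \<inter> {1..n})"

definition has_density :: "nat set \<Rightarrow> real \<Rightarrow> bool" where
  "has_density A \<delta> \<longleftrightarrow> ((\<lambda>n. real (counting A n) / real n) \<longlonglongrightarrow> \<delta>)"

definition DD :: "nat set set" where
  "DD = {A. A \<subseteq> {1..} \<and> (\<exists>\<delta>. has_density A \<delta>)}"

definition asymp_density :: "nat set \<Rightarrow> real" where
  "asymp_density A = lim (\<lambda>n. real (counting A n) / real n)"

definition inner_density :: "nat set \<Rightarrow> real" where
  "inner_density A = Sup {asymp_density B | B. B \<subseteq> A \<and> B \<in> DD}"

end

theory Submission
  imports Defs
begin

lemma counting_Suc: "counting X (Suc n) = counting X n + (if Suc n \<in> X then 1 else 0)"
proof -
  have "X \<inter> {1..Suc n} = (if Suc n \<in> X then insert (Suc n) (X \<inter> {1..n}) else X \<inter> {1..n})"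
    by (auto simp: le_Suc_eq)
  then show ?thesis by (simp add: counting_def)
qed

lemma counting_le: "counting X n \<le> n"
proof -
  have "card (X \<inter> {1..n}) \<le> card {1..n}" by (rule card_mono) auto
  then show ?thesis by (simp add: counting_def)
qed

lemma density_bounds: assumes "has_density X d" shows "0 \<le> d \<and> d \<le> 1"
proof -
  have L: "(\<lambda>n. real (counting X n) / real n) \<longlonglongrightarrow> d" using assms by (simp add: has_density_def)
  have "\<forall>n\<ge>0. real (counting X n) / real n \<le> 1"
  proof (intro allI impI)
    fix n :: nat show "real (counting X n) / real n \<le> 1"
      using counting_le[of X n] by (cases "n = 0") (auto simp: divide_le_eq_1)
  qed
  then have "d \<le> 1" using LIMSEQ_le_const2[OF L] by blast
  moreover have "d \<ge> 0" using LIMSEQ_le_const[OF L] by (metis divide_nonneg_nonneg of_nat_0_le_iff)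
  ultimately show ?thesis by simp
qed

lemma density_eq: "has_density X d \<Longrightarrow> asymp_density X = d"
  by (simp add: asymp_density_def has_density_def limI)

lemma union_density:
  assumes "X \<inter> Y = {}" "has_density X a" "has_density Y b"
  shows "has_density (X \<union> Y) (a + b)"
proof -
  have c: "counting (X \<union> Y) n = counting X n + counting Y n" for n
  proof -
    have "(X \<union> Y) \<inter> {1..n} = (X \<inter> {1..n}) \<union> (Y \<inter> {1..n})" by auto
    moreover have "card ((X \<inter> {1..n}) \<union> (Y \<inter> {1..n})) = card (X \<inter> {1..n}) + card (Y \<inter> {1..n})"
      using assms(1) by (intro card_Un_disjoint) auto
    ultimately show ?thesis by (simp add: counting_def)
  qed
  have "(\<lambda>n. real (counting X n) / real n + real (counting Y n) / real n) \<longlonglongrightarrow> a + b"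
    using assms(2,3) by (intro tendsto_add) (auto simp: has_density_def)
  then show ?thesis by (simp add: has_density_def c add_divide_distrib)
qed


fun gr :: "nat set \<Rightarrow> real \<Rightarrow> nat \<Rightarrow> nat" where
  "gr D b 0 = 0"
| "gr D b (Suc k) = (if Suc k \<in> D \<and> real (gr D b k) + 1 \<le> b * real (Suc k) then Suc (gr D b k) else gr D b k)"

lemma gr_upper: "b \<ge> 0 \<Longrightarrow> real (gr D b n) \<le> b * real n"
proof (induction n)
  case 0 then show ?case by simp
next
  case (Suc n)
  have "b * real n \<le> b * real (Suc n)" using Suc.prems by (intro mult_left_mono) auto
  then show ?case using Suc by auto
qed

lemma gr_lower: "\<exists>m\<le>n. real (gr D b n) \<ge> b * real m - 1 + real (counting D n) - real (counting D m)"
proof (induction n)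
  case 0 then show ?case by (simp add: counting_def)
next
  case (Suc n)
  then obtain m where m: "m \<le> n" "real (gr D b n) \<ge> b * real m - 1 + real (counting D n) - real (counting D m)" by blast
  show ?case
  proof (cases "Suc n \<in> D \<and> real (gr D b n) + 1 \<le> b * real (Suc n)")
    case True
    then show ?thesis using m by (intro exI[of _ m]) (auto simp: counting_Suc)
  next
    case False
    show ?thesis
    proof (cases "Suc n \<in> D")
      case True
      with False have "real (gr D b n) + 1 > b * real (Suc n)" by auto
      then show ?thesis using True False by (intro exI[of _ "Suc n"]) auto
    next
      case F2: False
      then show ?thesis using m by (intro exI[of _ m]) (auto simp: counting_Suc)
    qed
  qed
qed

lemma gr_counting:
  "counting {k. k \<ge> 1 \<and> k \<in> D \<and> real (gr D b (k - 1)) + 1 \<le> b * real k} n = gr D b n"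
proof (induction n)
  case 0 then show ?case by (simp add: counting_def)
next
  case (Suc n) then show ?case by (simp add: counting_Suc)
qed

lemma incr_mono:
  assumes "m \<le> n"
  shows "real (counting (C - A) n) + real (counting A n) - real (counting C n)
     \<ge> real (counting (C - A) m) + real (counting A m) - real (counting C m)"
proof -
  let ?f = "\<lambda>n. real (counting (C - A) n) + real (counting A n) - real (counting C n)"
  have "?f n \<le> ?f (Suc n)" for n by (auto simp: counting_Suc)
  then show ?thesis using lift_Suc_mono_le[of ?f] assms by blast
qed


lemma construct:
  assumes hC: "has_density C c" and hA: "has_density A a" and bpos: "0 \<le> c - a"
  shows "has_density {k. k \<ge> 1 \<and> k \<in> C - A \<and> real (gr (C - A) (c - a) (k - 1)) + 1 \<le> (c - a) * real k} (c - a)"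
proof -
  define b where "b = c - a"
  define D where "D = C - A"
  define r where "r k = real (counting C k) - real (counting A k) - b * real k" for k
  have b0: "b \<ge> 0" using bpos b_def by simp
  have low: "\<exists>m\<le>n. real (gr D b n) \<ge> b * real n - 1 + r n - r m" for n
  proof -
    obtain m where m: "m \<le> n" "real (gr D b n) \<ge> b * real m - 1 + real (counting D n) - real (counting D m)"
      using gr_lower by blast
    have "real (counting D n) + real (counting A n) - real (counting C n)
     \<ge> real (counting D m) + real (counting A m) - real (counting C m)"
      using incr_mono[OF m(1), of C A] by (simp add: D_def)
    then show ?thesis using m by (intro exI[of _ m]) (auto simp: r_def algebra_simps)
  qed
  have r0: "(\<lambda>k. r k / real k) \<longlonglongrightarrow> 0"
  proof -
    have "(\<lambda>k. real (counting C k) / real k - real (counting A k) / real k - b) \<longlonglongrightarrow> c - a - b"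
      using hC hA by (intro tendsto_diff tendsto_const) (auto simp: has_density_def)
    then have L: "(\<lambda>k. real (counting C k) / real k - real (counting A k) / real k - b) \<longlonglongrightarrow> 0"
      by (simp add: b_def)
    have "eventually (\<lambda>k. real (counting C k) / real k - real (counting A k) / real k - b = r k / real k) sequentially"
      using eventually_gt_at_top[of 0]
      by eventually_elim (auto simp: r_def field_simps)
    then show ?thesis using Lim_transform_eventually[OF L] by (simp add: eventually_mono)
  qed
  have "(\<lambda>n. real (gr D b n) / real n) \<longlonglongrightarrow> b"
  proof (rule LIMSEQ_I)
    fix e :: real assume e: "0 < e"
    obtain N where N: "\<forall>k\<ge>N. norm (r k / real k - 0) < e / 4"
      using LIMSEQ_D[OF r0, of "e/4"] e by auto
    define K where "K = (\<Sum>m<N. \<bar>r m\<bar>)"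
    have K0: "K \<ge> 0" unfolding K_def by (intro sum_nonneg) auto
    have rb: "\<bar>r m\<bar> \<le> K + e / 4 * real n" if "m \<le> n" for m n
    proof (cases "m < N")
      case True
      then have "\<bar>r m\<bar> \<le> K" unfolding K_def by (intro member_le_sum) auto
      moreover have "e / 4 * real n \<ge> 0" using e by simp
      ultimately show ?thesis by linarith
    next
      case False
      show ?thesis
      proof (cases "m = 0")
        case True then show ?thesis using K0 e by (simp add: r_def counting_def)
      next
        case m0: False
        have "\<bar>r m / real m\<bar> < e / 4" using N False by auto
        then have "\<bar>r m\<bar> < e / 4 * real m" using m0 by (simp add: abs_divide divide_less_eq)
        moreover have "e / 4 * real m \<le> e / 4 * real n" using that e by (intro mult_left_mono) auto
        ultimately show ?thesis using K0 by linarith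
      qed
    qed
    define no where "no = max (Suc N) (nat \<lceil>2 * (1 + 2 * K) / e\<rceil> + 1)"
    show "\<exists>no. \<forall>n\<ge>no. norm (real (gr D b n) / real n - b) < e"
    proof (intro exI allI impI)
      fix n assume n: "no \<le> n"
      have npos: "real n > 0" using n by (simp add: no_def)
      have nbig: "real n > 2 * (1 + 2 * K) / e" using n unfolding no_def by linarith
      then have nbig': "e * real n > 2 * (1 + 2 * K)" using e by (simp add: divide_less_eq mult.commute)
      obtain m where m: "m \<le> n" "real (gr D b n) \<ge> b * real n - 1 + r n - r m" using low by blast
      have "\<bar>r n\<bar> \<le> K + e / 4 * real n" "\<bar>r m\<bar> \<le> K + e / 4 * real n" using rb m(1) by auto
      then have lo: "real (gr D b n) \<ge> b * real n - 1 - 2 * K - e / 2 * real n" using m(2) by linarith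
      have up: "real (gr D b n) \<le> b * real n" using gr_upper[OF b0] .
      have "\<bar>real (gr D b n) - b * real n\<bar> < e * real n" using lo up nbig' K0 by (simp add: abs_le_iff abs_less_iff)
      then have "\<bar>(real (gr D b n) - b * real n) / real n\<bar> < e" using npos
        by (simp add: abs_divide divide_less_eq)
      moreover have "(real (gr D b n) - b * real n) / real n = real (gr D b n) / real n - b"
        using npos by (simp add: field_simps)
      ultimately show "norm (real (gr D b n) / real n - b) < e" by simp
    qed
  qed
  then show ?thesis unfolding has_density_def b_def D_def gr_counting by simp
qed


lemma DD_density: "C \<in> DD \<Longrightarrow> has_density C (asymp_density C)"
  unfolding DD_def using density_eq by auto

lemma S_bdd: "bdd_above {asymp_density B | B. B \<subseteq> X \<and> B \<in> DD}"
  by (rule bdd_aboveI[of _ 1]) (use DD_density density_bounds in blast)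

lemma empty_DD: "{} \<in> DD" and empty_dens: "asymp_density {} = 0"
proof -
  have h: "has_density {} 0" by (simp add: has_density_def counting_def)
  then show "{} \<in> DD" by (auto simp: DD_def)
  show "asymp_density {} = 0" using density_eq[OF h] .
qed

lemma S_ne: "0 \<in> {asymp_density B | B. B \<subseteq> X \<and> B \<in> DD}"
  using empty_DD empty_dens by force

theorem lemma3p9:
  fixes A B :: "nat set"
  assumes "A \<subseteq> {1..}" and "B \<subseteq> {1..}"
    and "A \<in> DD" and "A \<inter> B = {}"
  shows "inner_density (A \<union> B) = asymp_density A + inner_density B"
proof -
  define a where "a = asymp_density A"
  have hA: "has_density A a" using DD_density[OF assms(3)] a_def by simp
  let ?SU = "{asymp_density C | C. C \<subseteq> A \<union> B \<and> C \<in> DD}"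
  let ?SB = "{asymp_density C | C. C \<subseteq> B \<and> C \<in> DD}"
  have neU: "?SU \<noteq> {}" and neB: "?SB \<noteq> {}" using S_ne by blast+
  have iB0: "inner_density B \<ge> 0" unfolding inner_density_def
    by (rule cSup_upper[OF S_ne S_bdd])
  have ge: "a + inner_density B \<le> inner_density (A \<union> B)"
  proof -
    have "inner_density B \<le> inner_density (A \<union> B) - a"
      unfolding inner_density_def
    proof (rule cSup_least[OF neB])
      fix x assume "x \<in> ?SB"
      then obtain C where C: "x = asymp_density C" "C \<subseteq> B" "C \<in> DD" by blast
      have hC: "has_density C x" using DD_density[OF C(3)] C(1) by simp
      have hU: "has_density (A \<union> C) (a + x)"
        using union_density[OF _ hA hC] assms(4) C(2) by blast
      have "A \<union> C \<in> DD" using hU assms(1) C(3) by (auto simp: DD_def)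
      then have "a + x \<in> ?SU" using density_eq[OF hU] C(2) by (intro CollectI exI[of _ "A \<union> C"]) auto
      then have "a + x \<le> Sup ?SU" by (rule cSup_upper[OF _ S_bdd])
      then show "x \<le> Sup ?SU - a" by simp
    qed
    then show ?thesis by simp
  qed
  have le: "inner_density (A \<union> B) \<le> a + inner_density B"
    unfolding inner_density_def
  proof (rule cSup_least[OF neU])
    fix x assume "x \<in> ?SU"
    then obtain C where C: "x = asymp_density C" "C \<subseteq> A \<union> B" "C \<in> DD" by blast
    have hC: "has_density C x" using DD_density[OF C(3)] C(1) by simp
    show "x \<le> a + Sup ?SB"
    proof (cases "0 \<le> x - a")
      case False then show ?thesis using iB0 unfolding inner_density_def by simp
    next
      case True
      define F where "F = {k. k \<ge> 1 \<and> k \<in> C - A \<and> real (gr (C - A) (x - a) (k - 1)) + 1 \<le> (x - a) * real k}"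
      have hF: "has_density F (x - a)" unfolding F_def by (rule construct[OF hC hA True])
      have FB: "F \<subseteq> B" using C(2) by (auto simp: F_def)
      have "F \<in> DD" using hF by (auto simp: DD_def F_def)
      then have "x - a \<in> ?SB" using density_eq[OF hF] FB by (intro CollectI exI[of _ F]) auto
      then have "x - a \<le> Sup ?SB" by (rule cSup_upper[OF _ S_bdd])
      then show ?thesis by simp
    qed
  qed
  show ?thesis using ge le a_def by simp
qed

end
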